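(* In the multilevel setting, assume (P1) and (P2). Then the multilevel iteration sequence $\{x^k\}$ is bounded.
   Context: Multilevel setting. For $i=0,\dots,N$ let $f_i:\mathbb R^n\to\mathbb R$ be convex and continuously differentiable with $L_{f_i}$-Lipschitz gradient and $g_i:\mathbb R^n\to(-\infty,+\infty]$ proper, lower semicontinuous and convex; $\phi_i=f_i+g_i$. Set $X_0^*=\mathbb R^n$ and $X_{i+1}^*=\arg\min_{x\in X_i^*}\phi_i(x)$. Let $\omega:\mathbb R^n\to\mathbb R$ be $\mu$-strongly convex, continuously differentiable with $L_\omega$-Lipschitz gradient, and $S(x)=T_0(x)=x-u\nabla\omega(x)$ with $u\in(0,\tfrac2{L_\omega+\mu}]$, a contraction with constant $r=\sqrt{1-\tfrac{2u\mu L_\omega}{\mu+L_\omega}}\in[0,1)$. For $i=1,\dots,N$ let $T_i(x)=\mathrm{prox}_{t_{i-1}g_{i-1}}(x-t_{i-1}\nabla f_{i-1}(x))$ with $t_{i-1}\in(0,1/L_{f_{i-1}}]$, where $\mathrm{prox}_g(x)=\arg\min_u\{g(u)+\frac12\|u-x\|^2\}$; these are nonexpansive and $\mathrm{Fix}(T_1)=X_1^*$, assumed nonempty. Given $x^0$ and weights $\alpha_k^{(0)},\dots,\alpha_k^{(N)}$, the multilevel iteration is $x^{k+1}=\sum_{i=0}^N\alpha_k^{(i)}T_i(x^k)$. (P1): $\alpha_k^{(i)}\ge0$, $\alpha_k^{(0)}<1$, and $\sum_{i=0}^N\alpha_k^{(i)}=1$ for all $k$. (P2): $\alpha_k^{(0)}\to0$,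 $\sum_k\alpha_k^{(0)}=\infty$, and $\delta^*:=\limsup_{k\to\infty}\frac1{\alpha_k^{(0)}}\sum_{i=2}^N\alpha_k^{(i)}\in[0,+\infty)$. *)

theory Defs
  imports "HOL-Analysis.Analysis"
begin

definition proper_fun :: "('a \<Rightarrow> ereal) \<Rightarrow> bool" where
  "proper_fun g \<longleftrightarrow> (\<forall>x. g x \<noteq> -\<infinity>) \<and> (\<exists>x. g x \<noteq> \<infinity>)"

definition lsc_fun :: "('a::topological_space \<Rightarrow> ereal) \<Rightarrow> bool" where
  "lsc_fun g \<longleftrightarrow> (\<forall>c::real. closed {x. g x \<le> ereal c})"

definition ereal_convex_fun :: "('a::real_vector \<Rightarrow> ereal) \<Rightarrow> bool" where
  "ereal_convex_fun g \<longleftrightarrow>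
     (\<forall>x y. \<forall>\<theta>::real. 0 \<le> \<theta> \<and> \<theta> \<le> 1 \<longrightarrow>
        g ((1 - \<theta>) *\<^sub>R x + \<theta> *\<^sub>R y) \<le> ereal (1 - \<theta>) * g x + ereal \<theta> * g y)"

definition prox :: "('a::real_normed_vector \<Rightarrow> ereal) \<Rightarrow> 'a \<Rightarrow> 'a" where
  "prox g x = (SOME p. \<forall>u. g p + ereal (1/2 * (norm (p - x))\<^sup>2) \<le> g u + ereal (1/2 * (norm (u - x))\<^sup>2))"

definition phi :: "(nat \<Rightarrow> 'a \<Rightarrow> real) \<Rightarrow> (nat \<Rightarrow> 'a \<Rightarrow> ereal) \<Rightarrow> nat \<Rightarrow> 'a \<Rightarrow> ereal" where
  "phi f g i x = ereal (f i x) + g i x"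

fun Xstar :: "(nat \<Rightarrow> 'a \<Rightarrow> real) \<Rightarrow> (nat \<Rightarrow> 'a \<Rightarrow> ereal) \<Rightarrow> nat \<Rightarrow> 'a set" where
  "Xstar f g 0 = UNIV"
| "Xstar f g (Suc i) = {x \<in> Xstar f g i. \<forall>y \<in> Xstar f g i. phi f g i x \<le> phi f g i y}"

definition Top :: "('a::real_normed_vector \<Rightarrow> 'a) \<Rightarrow> real \<Rightarrow> (nat \<Rightarrow> 'a \<Rightarrow> 'a) \<Rightarrow>
     (nat \<Rightarrow> 'a \<Rightarrow> ereal) \<Rightarrow> (nat \<Rightarrow> real) \<Rightarrow> nat \<Rightarrow> 'a \<Rightarrow> 'a" where
  "Top gw u gf g t i x =
     (if i = 0 then x - u *\<^sub>R gw x
      else prox (\<lambda>v. ereal (t (i - 1)) * g (i - 1) v) (x - t (i - 1) *\<^sub>R gf (i - 1) x))"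

end

theory Submission
  imports Defs
begin

lemma dir_deriv:
  fixes f :: "'a::euclidean_space \<Rightarrow> real"
  assumes "(f has_derivative (\<lambda>h. G \<bullet> h)) (at x)"
  shows "((\<lambda>s. (f (x + s *\<^sub>R d) - f x) / s) \<longlongrightarrow> G \<bullet> d) (at_right 0)"
proof -
  have l: "((\<lambda>s. x + s *\<^sub>R d) has_derivative (\<lambda>s. s *\<^sub>R d)) (at 0)"
    by (auto intro!: derivative_eq_intros)
  have a: "(f has_derivative (\<lambda>h. G \<bullet> h)) (at (x + 0 *\<^sub>R d))" using assms by simp
  have "((\<lambda>s. f (x + s *\<^sub>R d)) has_derivative (\<lambda>s. G \<bullet> (s *\<^sub>R d))) (at 0)"
    using has_derivative_compose[OF l a] by (simp add: o_def)
  hence "((\<lambda>s. f (x + s *\<^sub>R d)) has_real_derivative (G \<bullet> d)) (at 0)"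
    unfolding has_field_derivative_def
    proof -
      assume h: "((\<lambda>s. f (x + s *\<^sub>R d)) has_derivative (\<lambda>s. G \<bullet> (s *\<^sub>R d))) (at 0)"
      have "(\<lambda>s. G \<bullet> (s *\<^sub>R d)) = (*) (G \<bullet> d)" by (auto simp: fun_eq_iff)
      with h show "((\<lambda>s. f (x + s *\<^sub>R d)) has_derivative (*) (G \<bullet> d)) (at 0)" by simp
    qed
  hence "((\<lambda>h. (f (x + h *\<^sub>R d) - f x) / h) \<longlongrightarrow> G \<bullet> d) (at 0)" by (simp add: DERIV_def)
  thus ?thesis using tendsto_mono[OF at_le] by blast
qed

lemma lim_upper:
  fixes q :: "real \<Rightarrow> real"
  assumes "\<And>s. 0 < s \<Longrightarrow> s \<le> 1 \<Longrightarrow> q s \<le> a" "(q \<longlongrightarrow> l) (at_right 0)"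
  shows "l \<le> a"
proof (rule tendsto_upperbound[OF assms(2)])
  show "\<forall>\<^sub>F s in at_right 0. q s \<le> a"
    using eventually_at_right_real[of 0 1] by (rule eventually_mono) (use assms(1) in auto)
qed simp

lemma lim_lower:
  fixes q :: "real \<Rightarrow> real"
  assumes "\<And>s. 0 < s \<Longrightarrow> s \<le> 1 \<Longrightarrow> a \<le> q s" "(q \<longlongrightarrow> l) (at_right 0)"
  shows "a \<le> l"
proof (rule tendsto_lowerbound[OF assms(2)])
  show "\<forall>\<^sub>F s in at_right 0. a \<le> q s"
    using eventually_at_right_real[of 0 1] by (rule eventually_mono) (use assms(1) in auto)
qed simp

lemma convex_tangent:
  fixes f :: "'a::euclidean_space \<Rightarrow> real"
  assumes cv: "convex_on UNIV f" and d: "(f has_derivative (\<lambda>h. G \<bullet> h)) (at x)"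
  shows "f x + G \<bullet> (y - x) \<le> f y"
proof -
  have "G \<bullet> (y - x) \<le> f y - f x"
  proof (rule lim_upper[OF _ dir_deriv[OF d]])
    fix s :: real assume s: "0 < s" "s \<le> 1"
    have "f ((1 - s) *\<^sub>R x + s *\<^sub>R y) \<le> (1 - s) * f x + s * f y"
      using convex_onD[OF cv] s by auto
    moreover have "(1 - s) *\<^sub>R x + s *\<^sub>R y = x + s *\<^sub>R (y - x)" by (simp add: algebra_simps)
    ultimately have "f (x + s *\<^sub>R (y - x)) - f x \<le> s * (f y - f x)" by (simp add: algebra_simps)
    thus "(f (x + s *\<^sub>R (y - x)) - f x) / s \<le> f y - f x" using s by (simp add: divide_le_eq mult.commute)
  qed
  thus ?thesis by simp
qed

lemma descent:
  fixes f :: "'a::euclidean_space \<Rightarrow> real"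
  assumes d: "\<And>y. (f has_derivative (\<lambda>h. G y \<bullet> h)) (at y)" and L: "lipschitz_on L UNIV G"
  shows "f y \<le> f x + G x \<bullet> (y - x) + L / 2 * (norm (y - x))\<^sup>2"
proof -
  define v where "v = y - x"
  define h where "h s = f (x + s *\<^sub>R v) - s * (G x \<bullet> v) - L * s\<^sup>2 / 2 * (norm v)\<^sup>2" for s
  have "h 1 \<le> h 0"
  proof (rule DERIV_nonpos_imp_nonincreasing[of 0 1 h])
    fix s :: real assume s: "0 \<le> s" "s \<le> 1"
    have l: "((\<lambda>s. x + s *\<^sub>R v) has_derivative (\<lambda>s. s *\<^sub>R v)) (at s)"
      by (auto intro!: derivative_eq_intros)
    have "((\<lambda>s. f (x + s *\<^sub>R v)) has_derivative (\<lambda>r. G (x + s *\<^sub>R v) \<bullet> (r *\<^sub>R v))) (at s)"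
      using has_derivative_compose[OF l d] by (simp add: o_def)
    hence d1: "((\<lambda>s. f (x + s *\<^sub>R v)) has_real_derivative (G (x + s *\<^sub>R v) \<bullet> v)) (at s)"
      unfolding has_field_derivative_def
    proof -
      assume h: "((\<lambda>s. f (x + s *\<^sub>R v)) has_derivative (\<lambda>r. G (x + s *\<^sub>R v) \<bullet> (r *\<^sub>R v))) (at s)"
      have "(\<lambda>r. G (x + s *\<^sub>R v) \<bullet> (r *\<^sub>R v)) = (*) (G (x + s *\<^sub>R v) \<bullet> v)" by (auto simp: fun_eq_iff)
      with h show "((\<lambda>s. f (x + s *\<^sub>R v)) has_derivative (*) (G (x + s *\<^sub>R v) \<bullet> v)) (at s)" by simp
    qed
    have "(h has_real_derivative (G (x + s *\<^sub>R v) \<bullet> v - G x \<bullet> v - L * s * (norm v)\<^sup>2)) (at s)"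
      unfolding h_def by (rule derivative_eq_intros d1 refl | simp)+
    moreover have "G (x + s *\<^sub>R v) \<bullet> v - G x \<bullet> v - L * s * (norm v)\<^sup>2 \<le> 0"
    proof -
      have "G (x + s *\<^sub>R v) \<bullet> v - G x \<bullet> v = (G (x + s *\<^sub>R v) - G x) \<bullet> v" by (simp add: inner_diff_left)
      also have "\<dots> \<le> norm (G (x + s *\<^sub>R v) - G x) * norm v" by (rule norm_cauchy_schwarz)
      also have "norm (G (x + s *\<^sub>R v) - G x) \<le> L * norm (s *\<^sub>R v)"
        using lipschitz_onD[OF L, of "x + s *\<^sub>R v" x] by (simp add: dist_norm)
      hence "norm (G (x + s *\<^sub>R v) - G x) * norm v \<le> L * norm (s *\<^sub>R v) * norm v"
        by (simp add: mult_right_mono)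
      also have "\<dots> = L * s * (norm v)\<^sup>2" using s by (simp add: power2_eq_square)
      finally show ?thesis by simp
    qed
    ultimately show "\<exists>y. (h has_real_derivative y) (at s) \<and> y \<le> 0" by blast
  qed simp
  thus ?thesis unfolding h_def v_def by (simp add: algebra_simps)
qed

lemma cocoercive_half:
  fixes f :: "'a::euclidean_space \<Rightarrow> real"
  assumes cv: "convex_on UNIV f" and d: "\<And>y. (f has_derivative (\<lambda>h. G y \<bullet> h)) (at y)"
    and D: "\<And>x y. f y \<le> f x + G x \<bullet> (y - x) + L / 2 * (norm (y - x))\<^sup>2" and L: "L > 0"
  shows "f x + G x \<bullet> (y - x) + 1 / (2 * L) * (norm (G y - G x))\<^sup>2 \<le> f y"
proof -
  define c where "c = 1 / L"
  define \<Delta> where "\<Delta> = G y - G x"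
  define z where "z = y - c *\<^sub>R \<Delta>"
  have t: "f x + G x \<bullet> (z - x) \<le> f z" by (rule convex_tangent[OF cv d])
  have dd: "f z \<le> f y + G y \<bullet> (z - y) + L / 2 * (norm (z - y))\<^sup>2" by (rule D)
  have e1: "G x \<bullet> (z - x) = G x \<bullet> (y - x) - c * (G x \<bullet> \<Delta>)"
    unfolding z_def by (simp add: inner_diff_right algebra_simps)
  have e2: "G y \<bullet> (z - y) = - c * (G y \<bullet> \<Delta>)"
    unfolding z_def by (simp add: inner_diff_right)
  have cp: "c > 0" using L unfolding c_def by simp
  have "norm (z - y) = c * norm \<Delta>" unfolding z_def using cp by simp
  hence "L / 2 * (norm (z - y))\<^sup>2 = c / 2 * (norm \<Delta>)\<^sup>2"
    unfolding c_def using L by (simp add: power2_eq_square field_simps)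
  hence e3: "L / 2 * (norm (z - y))\<^sup>2 = c / 2 * (\<Delta> \<bullet> \<Delta>)" by (simp add: power2_norm_eq_inner)
  have e4: "G y \<bullet> \<Delta> - G x \<bullet> \<Delta> = \<Delta> \<bullet> \<Delta>" unfolding \<Delta>_def by (simp add: inner_diff_left)
  have "f x + G x \<bullet> (y - x) + c / 2 * (\<Delta> \<bullet> \<Delta>) \<le> f y"
    using t dd e1 e2 e3 e4 by (simp add: algebra_simps)
  thus ?thesis unfolding c_def \<Delta>_def by (simp add: power2_norm_eq_inner)
qed

lemma cocoercive_pos:
  fixes f :: "'a::euclidean_space \<Rightarrow> real"
  assumes cv: "convex_on UNIV f" and d: "\<And>y. (f has_derivative (\<lambda>h. G y \<bullet> h)) (at y)"
    and D: "\<And>x y. f y \<le> f x + G x \<bullet> (y - x) + L / 2 * (norm (y - x))\<^sup>2" and L: "L > 0"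
  shows "(norm (G x - G y))\<^sup>2 \<le> L * ((G x - G y) \<bullet> (x - y))"
proof -
  have a: "f x + G x \<bullet> (y - x) + 1 / (2 * L) * (norm (G y - G x))\<^sup>2 \<le> f y"
    by (rule cocoercive_half[OF cv d D L])
  have b: "f y + G y \<bullet> (x - y) + 1 / (2 * L) * (norm (G x - G y))\<^sup>2 \<le> f x"
    by (rule cocoercive_half[OF cv d D L])
  have n: "norm (G y - G x) = norm (G x - G y)" by (rule norm_minus_commute)
  have i: "G x \<bullet> (y - x) + G y \<bullet> (x - y) = - ((G x - G y) \<bullet> (x - y))"
    by (simp add: inner_diff_left inner_diff_right algebra_simps)
  have "1 / L * (norm (G x - G y))\<^sup>2 \<le> (G x - G y) \<bullet> (x - y)"
    using a b n i by (simp add: algebra_simps)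
  thus ?thesis using L by (simp add: field_simps)
qed

lemma cocoercive:
  fixes f :: "'a::euclidean_space \<Rightarrow> real"
  assumes cv: "convex_on UNIV f" and d: "\<And>y. (f has_derivative (\<lambda>h. G y \<bullet> h)) (at y)"
    and D: "\<And>x y. f y \<le> f x + G x \<bullet> (y - x) + L / 2 * (norm (y - x))\<^sup>2" and L: "L \<ge> 0"
  shows "(norm (G x - G y))\<^sup>2 \<le> L * ((G x - G y) \<bullet> (x - y))"
proof (cases "L > 0")
  case True thus ?thesis by (rule cocoercive_pos[OF cv d D])
next
  case False
  hence L0: "L = 0" using L by simp
  have all: "(norm (G x - G y))\<^sup>2 \<le> e * ((G x - G y) \<bullet> (x - y))" if e: "e > 0" for e
  proof (rule cocoercive_pos[OF cv d _ e])
    fix a b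
    have "f b \<le> f a + G a \<bullet> (b - a) + L / 2 * (norm (b - a))\<^sup>2" by (rule D)
    also have "\<dots> \<le> f a + G a \<bullet> (b - a) + e / 2 * (norm (b - a))\<^sup>2"
    proof -
      have "0 \<le> e / 2 * (norm (b - a))\<^sup>2" using e by simp
      moreover have "L / 2 * (norm (b - a))\<^sup>2 = 0" using L0 by simp
      ultimately show ?thesis by linarith
    qed
    finally show "f b \<le> f a + G a \<bullet> (b - a) + e / 2 * (norm (b - a))\<^sup>2" .
  qed
  define I where "I = (G x - G y) \<bullet> (x - y)"
  define n where "n = (norm (G x - G y))\<^sup>2"
  have "n \<le> 0"
  proof (rule ccontr)
    assume "\<not> n \<le> 0" hence np: "n > 0" by simp
    have h1: "n \<le> 1 * I" using all[of 1] unfolding n_def I_def by simp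
    hence Ip: "I > 0" using np by simp
    have ep: "n / (2 * I) > 0" using np Ip by simp
    have "n \<le> (n / (2 * I)) * I" using all[OF ep] unfolding n_def I_def .
    also have "(n / (2 * I)) * I = n / 2" using Ip by (simp add: field_simps)
    finally show False using np by linarith
  qed
  thus ?thesis using L0 unfolding n_def by simp
qed

lemma norm_sq_expand:
  fixes a D :: "'a::real_inner"
  shows "(norm (a - t *\<^sub>R D))\<^sup>2 = (norm a)\<^sup>2 - 2 * t * (D \<bullet> a) + t\<^sup>2 * (norm D)\<^sup>2"
proof -
  have "(norm (a - t *\<^sub>R D))\<^sup>2 = (a - t *\<^sub>R D) \<bullet> (a - t *\<^sub>R D)" by (simp add: power2_norm_eq_inner)
  also have "\<dots> = a \<bullet> a - 2 * t * (D \<bullet> a) + t\<^sup>2 * (D \<bullet> D)"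
    by (simp add: inner_diff_left inner_diff_right inner_commute[of a D] power2_eq_square right_diff_distrib)
  finally show ?thesis by (simp add: power2_norm_eq_inner)
qed

lemma grad_step_nonexp:
  fixes f :: "'a::euclidean_space \<Rightarrow> real"
  assumes cv: "convex_on UNIV f" and d: "\<And>y. (f has_derivative (\<lambda>h. G y \<bullet> h)) (at y)"
    and lip: "lipschitz_on L UNIV G" and t: "0 < t" "t * L \<le> 1"
  shows "norm ((x - t *\<^sub>R G x) - (y - t *\<^sub>R G y)) \<le> norm (x - y)"
proof -
  have L: "L \<ge> 0" using lipschitz_on_nonneg[OF lip] .
  have co: "(norm (G x - G y))\<^sup>2 \<le> L * ((G x - G y) \<bullet> (x - y))"
    by (rule cocoercive[OF cv d descent[OF d lip] L])
  have m1: "f x + G x \<bullet> (y - x) \<le> f y" by (rule convex_tangent[OF cv d])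
  have m2: "f y + G y \<bullet> (x - y) \<le> f x" by (rule convex_tangent[OF cv d])
  have "G x \<bullet> (y - x) + G y \<bullet> (x - y) = - ((G x - G y) \<bullet> (x - y))"
    by (simp add: inner_diff_left inner_diff_right algebra_simps)
  hence I0: "(G x - G y) \<bullet> (x - y) \<ge> 0" using m1 m2 by linarith
  define a where "a = x - y"
  define D where "D = G x - G y"
  have eq: "(x - t *\<^sub>R G x) - (y - t *\<^sub>R G y) = a - t *\<^sub>R D" unfolding a_def D_def by (simp add: algebra_simps)
  have E: "(norm (a - t *\<^sub>R D))\<^sup>2 = (norm a)\<^sup>2 - 2 * t * (D \<bullet> a) + t\<^sup>2 * (norm D)\<^sup>2"
    by (rule norm_sq_expand)
  have "t\<^sup>2 * (norm D)\<^sup>2 \<le> t\<^sup>2 * (L * (D \<bullet> a))" using co unfolding D_def a_def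
    by (simp add: mult_left_mono)
  also have "t\<^sup>2 * (L * (D \<bullet> a)) = t * (t * L) * (D \<bullet> a)" by (simp add: power2_eq_square)
  also have "\<dots> \<le> t * 1 * (D \<bullet> a)" using t I0 unfolding D_def a_def
    by (intro mult_right_mono mult_left_mono) auto
  finally have T: "t\<^sup>2 * (norm D)\<^sup>2 \<le> t * 1 * (D \<bullet> a)" .
  have "0 \<le> t * (D \<bullet> a)" using t I0 unfolding D_def a_def by simp
  hence "(norm (a - t *\<^sub>R D))\<^sup>2 \<le> (norm a)\<^sup>2" using E T by linarith
  hence "norm (a - t *\<^sub>R D) \<le> norm a" using power2_le_imp_le by fastforce
  thus ?thesis unfolding eq a_def .
qed

lemma S_contraction:
  fixes \<omega> :: "'a::euclidean_space \<Rightarrow> real"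
  assumes mu_pos: "\<mu> > 0"
    and omega_strong: "convex_on UNIV (\<lambda>y. \<omega> y - \<mu> / 2 * (norm y)\<^sup>2)"
    and omega_grad: "\<And>y. (\<omega> has_derivative (\<lambda>h. g\<omega> y \<bullet> h)) (at y)"
    and omega_lip: "lipschitz_on L UNIV g\<omega>"
    and u_range: "0 < u" "u \<le> 2 / (L + \<mu>)"
  shows "\<exists>r. 0 \<le> r \<and> r < 1 \<and> (\<forall>x y. norm ((x - u *\<^sub>R g\<omega> x) - (y - u *\<^sub>R g\<omega> y)) \<le> r * norm (x - y))"
proof -
  define \<psi> where "\<psi> y = \<omega> y - \<mu> / 2 * (y \<bullet> y)" for y
  define G where "G y = g\<omega> y - \<mu> *\<^sub>R y" for y
  have L0: "L \<ge> 0" using lipschitz_on_nonneg[OF omega_lip] .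
  have cv: "convex_on UNIV \<psi>"
  proof -
    have "(\<lambda>y. \<omega> y - \<mu> / 2 * (norm y)\<^sup>2) = \<psi>" by (auto simp: \<psi>_def fun_eq_iff power2_norm_eq_inner)
    thus ?thesis using omega_strong by simp
  qed
  have d: "(\<psi> has_derivative (\<lambda>h. G y \<bullet> h)) (at y)" for y
  proof -
    have "(\<psi> has_derivative (\<lambda>h. g\<omega> y \<bullet> h - \<mu> / 2 * (y \<bullet> h + h \<bullet> y))) (at y)"
      unfolding \<psi>_def by (rule derivative_eq_intros omega_grad refl)+
    moreover have "(\<lambda>h. g\<omega> y \<bullet> h - \<mu> / 2 * (y \<bullet> h + h \<bullet> y)) = (\<lambda>h. G y \<bullet> h)"
      by (auto simp: fun_eq_iff G_def inner_diff_right inner_diff_left inner_commute)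
    ultimately show ?thesis by simp
  qed
  have D: "\<psi> y \<le> \<psi> x + G x \<bullet> (y - x) + (L - \<mu>) / 2 * (norm (y - x))\<^sup>2" for x y
  proof -
    have de: "\<omega> y \<le> \<omega> x + g\<omega> x \<bullet> (y - x) + L / 2 * (norm (y - x))\<^sup>2"
      by (rule descent[OF omega_grad omega_lip])
    have sq: "(norm (y - x))\<^sup>2 = y \<bullet> y - 2 * (x \<bullet> y) + x \<bullet> x"
      by (simp add: power2_norm_eq_inner inner_diff_left inner_diff_right inner_commute)
    have gi: "G x \<bullet> (y - x) = g\<omega> x \<bullet> (y - x) - \<mu> * (x \<bullet> y) + \<mu> * (x \<bullet> x)"
      by (simp add: G_def inner_diff_left inner_diff_right)
    have I: "\<mu> / 2 * (y \<bullet> y) - \<mu> / 2 * (x \<bullet> x) - \<mu> * (x \<bullet> y) + \<mu> * (x \<bullet> x) = \<mu> / 2 * (norm (y - x))\<^sup>2"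
      unfolding sq by (simp add: algebra_simps)
    have I2: "(L - \<mu>) / 2 * (norm (y - x))\<^sup>2 = L / 2 * (norm (y - x))\<^sup>2 - \<mu> / 2 * (norm (y - x))\<^sup>2"
      by (simp add: diff_divide_distrib left_diff_distrib)
    show ?thesis unfolding \<psi>_def using de gi I I2 by linarith
  qed
  have Lmu: "L \<ge> \<mu>"
  proof -
    obtain b :: 'a where b: "b \<in> Basis" using nonempty_Basis by blast
    have nb: "norm b = 1" using b by simp
    have "\<psi> 0 + G 0 \<bullet> (b - 0) \<le> \<psi> b" by (rule convex_tangent[OF cv d])
    moreover have "\<psi> b \<le> \<psi> 0 + G 0 \<bullet> (b - 0) + (L - \<mu>) / 2 * (norm (b - 0))\<^sup>2" by (rule D)
    ultimately have "0 \<le> (L - \<mu>) / 2 * (norm (b - 0))\<^sup>2" by linarith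
    thus ?thesis using nb by simp
  qed
  have co: "(norm (G x - G y))\<^sup>2 \<le> (L - \<mu>) * ((G x - G y) \<bullet> (x - y))" for x y
    by (rule cocoercive[OF cv d D]) (use Lmu in simp)
  define s where "s = L + \<mu>"
  have sp: "s > 0" using mu_pos Lmu unfolding s_def by simp
  define \<rho> where "\<rho> = 1 - 2 * u * L * \<mu> / s"
  have key: "(norm ((x - u *\<^sub>R g\<omega> x) - (y - u *\<^sub>R g\<omega> y)))\<^sup>2 \<le> \<rho> * (norm (x - y))\<^sup>2" for x y
  proof -
    define a where "a = x - y"
    define \<Delta> where "\<Delta> = g\<omega> x - g\<omega> y"
    have GG: "G x - G y = \<Delta> - \<mu> *\<^sub>R a" unfolding G_def \<Delta>_def a_def by (simp add: algebra_simps)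
    have c1: "(norm (\<Delta> - \<mu> *\<^sub>R a))\<^sup>2 \<le> (L - \<mu>) * ((\<Delta> - \<mu> *\<^sub>R a) \<bullet> a)"
      using co[of x y] unfolding GG a_def by simp
    have e1: "(norm (\<Delta> - \<mu> *\<^sub>R a))\<^sup>2 = (norm \<Delta>)\<^sup>2 - 2 * \<mu> * (a \<bullet> \<Delta>) + \<mu>\<^sup>2 * (norm a)\<^sup>2"
      by (rule norm_sq_expand)
    have e2: "(\<Delta> - \<mu> *\<^sub>R a) \<bullet> a = \<Delta> \<bullet> a - \<mu> * (norm a)\<^sup>2"
      by (simp add: inner_diff_left power2_norm_eq_inner)
    have ic: "a \<bullet> \<Delta> = \<Delta> \<bullet> a" by (rule inner_commute)
    have c2: "(norm \<Delta>)\<^sup>2 + L * \<mu> * (norm a)\<^sup>2 \<le> s * (\<Delta> \<bullet> a)"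
    proof -
      have "(norm \<Delta>)\<^sup>2 - 2 * \<mu> * (\<Delta> \<bullet> a) + \<mu>\<^sup>2 * (norm a)\<^sup>2 \<le> (L - \<mu>) * (\<Delta> \<bullet> a - \<mu> * (norm a)\<^sup>2)"
        using c1 e1 e2 ic by simp
      thus ?thesis unfolding s_def by (simp add: algebra_simps power2_eq_square)
    qed
    have e3: "(norm (a - u *\<^sub>R \<Delta>))\<^sup>2 = (norm a)\<^sup>2 - 2 * u * (\<Delta> \<bullet> a) + u\<^sup>2 * (norm \<Delta>)\<^sup>2"
      by (rule norm_sq_expand)
    have us: "u * s \<le> 2" using u_range sp unfolding s_def by (simp add: field_simps)
    have "s * (norm (a - u *\<^sub>R \<Delta>))\<^sup>2 = s * (norm a)\<^sup>2 - 2 * u * (s * (\<Delta> \<bullet> a)) + u * (u * s) * (norm \<Delta>)\<^sup>2"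
      unfolding e3 by (simp add: algebra_simps power2_eq_square)
    also have "\<dots> \<le> s * (norm a)\<^sup>2 - 2 * u * ((norm \<Delta>)\<^sup>2 + L * \<mu> * (norm a)\<^sup>2) + u * 2 * (norm \<Delta>)\<^sup>2"
    proof -
      have "2 * u * ((norm \<Delta>)\<^sup>2 + L * \<mu> * (norm a)\<^sup>2) \<le> 2 * u * (s * (\<Delta> \<bullet> a))"
        using c2 u_range by simp
      moreover have "u * (u * s) * (norm \<Delta>)\<^sup>2 \<le> u * 2 * (norm \<Delta>)\<^sup>2"
        using us u_range by (intro mult_right_mono mult_left_mono) auto
      ultimately show ?thesis by linarith
    qed
    also have "\<dots> = s * (\<rho> * (norm a)\<^sup>2)" unfolding \<rho>_def using sp by (simp add: field_simps)
    finally have "s * (norm (a - u *\<^sub>R \<Delta>))\<^sup>2 \<le> s * (\<rho> * (norm a)\<^sup>2)" .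
    hence "(norm (a - u *\<^sub>R \<Delta>))\<^sup>2 \<le> \<rho> * (norm a)\<^sup>2" using sp by simp
    moreover have eqq: "(x - u *\<^sub>R g\<omega> x) - (y - u *\<^sub>R g\<omega> y) = a - u *\<^sub>R \<Delta>"
      unfolding a_def \<Delta>_def by (simp add: algebra_simps)
    ultimately show ?thesis unfolding eqq a_def by blast
  qed
  define r where "r = sqrt (max 0 \<rho>)"
  have r0: "0 \<le> r" unfolding r_def by simp
  have "\<rho> < 1"
  proof -
    have "0 < 2 * u * L * \<mu>" using u_range mu_pos Lmu by simp
    hence "0 < 2 * u * L * \<mu> / s" using sp by simp
    thus ?thesis unfolding \<rho>_def by simp
  qed
  hence "max 0 \<rho> < 1" by simp
  hence "sqrt (max 0 \<rho>) < sqrt 1" by (rule real_sqrt_less_mono)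
  hence r1: "r < 1" unfolding r_def by simp
  have "norm ((x - u *\<^sub>R g\<omega> x) - (y - u *\<^sub>R g\<omega> y)) \<le> r * norm (x - y)" for x y
  proof (rule power2_le_imp_le)
    have "(norm ((x - u *\<^sub>R g\<omega> x) - (y - u *\<^sub>R g\<omega> y)))\<^sup>2 \<le> \<rho> * (norm (x - y))\<^sup>2" by (rule key)
    also have "\<dots> \<le> max 0 \<rho> * (norm (x - y))\<^sup>2" by (intro mult_right_mono) auto
    also have "\<dots> = (r * norm (x - y))\<^sup>2" unfolding r_def by (simp add: power_mult_distrib)
    finally show "(norm ((x - u *\<^sub>R g\<omega> x) - (y - u *\<^sub>R g\<omega> y)))\<^sup>2 \<le> (r * norm (x - y))\<^sup>2" .
    show "0 \<le> r * norm (x - y)" using r0 by simp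
  qed
  thus ?thesis using r0 r1 by blast
qed

locale cvxdom =
  fixes D :: "'a::euclidean_space set" and \<gamma> :: "'a \<Rightarrow> real"
  assumes ne: "D \<noteq> {}"
    and cvx: "\<And>x y \<theta>. x \<in> D \<Longrightarrow> y \<in> D \<Longrightarrow> 0 \<le> \<theta> \<Longrightarrow> \<theta> \<le> 1 \<Longrightarrow>
        (1 - \<theta>) *\<^sub>R x + \<theta> *\<^sub>R y \<in> D \<and> \<gamma> ((1 - \<theta>) *\<^sub>R x + \<theta> *\<^sub>R y) \<le> (1 - \<theta>) * \<gamma> x + \<theta> * \<gamma> y"
    and cl: "\<And>c. closed {v \<in> D. \<gamma> v \<le> c}"
begin

definition \<Phi> :: "'a \<Rightarrow> 'a \<Rightarrow> real" where "\<Phi> x u = \<gamma> u + 1/2 * (norm (u - x))\<^sup>2"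

lemma lin_lower: "\<exists>x0\<in>D. \<exists>c1\<ge>0. \<forall>u\<in>D. \<gamma> x0 - 1 - c1 * norm (u - x0) \<le> \<gamma> u"
proof -
  obtain x0 where x0: "x0 \<in> D" using ne by blast
  define S where "S = {v \<in> D. \<gamma> v \<le> \<gamma> x0 - 1}"
  have "open (- S)" using cl[of "\<gamma> x0 - 1"] unfolding S_def by (simp add: open_Compl)
  moreover have "x0 \<in> - S" unfolding S_def by simp
  ultimately obtain r where r: "r > 0" "ball x0 r \<subseteq> - S" using open_contains_ball by blast
  have near: "\<gamma> x0 - 1 < \<gamma> v" if "v \<in> D" "dist x0 v < r" for v
    using r(2) that unfolding S_def by (auto simp: subset_iff)
  have "\<gamma> x0 - 1 - (2 / r) * norm (u - x0) \<le> \<gamma> u" if u: "u \<in> D" for u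
  proof (cases "norm (u - x0) < r")
    case True
    hence "\<gamma> x0 - 1 < \<gamma> u" using near[OF u] by (simp add: dist_norm norm_minus_commute)
    moreover have "0 \<le> (2 / r) * norm (u - x0)" using r by simp
    ultimately show ?thesis by linarith
  next
    case False
    define n where "n = norm (u - x0)"
    have nr: "n \<ge> r" using False unfolding n_def by simp
    hence np: "n > 0" using r by simp
    define \<theta> where "\<theta> = r / (2 * n)"
    have th: "0 < \<theta>" "\<theta> \<le> 1" unfolding \<theta>_def using r np nr by (auto simp: field_simps)
    define z where "z = (1 - \<theta>) *\<^sub>R x0 + \<theta> *\<^sub>R u"
    have zc: "z \<in> D \<and> \<gamma> z \<le> (1 - \<theta>) * \<gamma> x0 + \<theta> * \<gamma> u"
      unfolding z_def using cvx[OF x0 u] th by simp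
    have "z - x0 = \<theta> *\<^sub>R (u - x0)" unfolding z_def by (simp add: algebra_simps)
    hence "norm (z - x0) = \<theta> * n" unfolding n_def using th by simp
    hence "dist x0 z = \<theta> * n" by (simp add: dist_norm norm_minus_commute)
    also have "\<theta> * n = r / 2" unfolding \<theta>_def using np by simp
    finally have "dist x0 z < r" using r by simp
    hence "\<gamma> x0 - 1 < \<gamma> z" using near zc by blast
    hence "\<theta> * \<gamma> x0 - 1 < \<theta> * \<gamma> u" using zc by (simp add: algebra_simps)
    hence "\<gamma> x0 - 1 / \<theta> < \<gamma> u" using th by (simp add: field_simps)
    moreover have "1 / \<theta> = (2 / r) * n" unfolding \<theta>_def using r np by simp
    ultimately show ?thesis unfolding n_def by simp
  qed
  moreover have "2 / r \<ge> 0" using r by simp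
  ultimately show ?thesis using x0 by blast
qed

lemma sub_closed: "closed {u \<in> D. \<Phi> x u \<le> c}"
proof (subst closed_sequential_limits, intro allI impI, elim conjE)
  fix s l assume s: "\<forall>n. s n \<in> {u \<in> D. \<Phi> x u \<le> c}" and l: "s \<longlonglongrightarrow> l"
  define q where "q v = 1/2 * (norm (v - x))\<^sup>2" for v
  have qc: "(\<lambda>n. q (s n)) \<longlonglongrightarrow> q l" unfolding q_def by (intro tendsto_intros l)
  have "l \<in> D \<and> \<gamma> l \<le> c - q l + e" if e: "e > 0" for e
  proof -
    have ev: "\<forall>\<^sub>F n in sequentially. q l - e < q (s n)" using order_tendstoD(1)[OF qc] e by simp
    have "\<forall>\<^sub>F n in sequentially. s n \<in> {v \<in> D. \<gamma> v \<le> c - q l + e}"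
      using ev
    proof (rule eventually_mono)
      fix n assume "q l - e < q (s n)"
      moreover have "s n \<in> D" "\<gamma> (s n) + q (s n) \<le> c" using s unfolding \<Phi>_def q_def by auto
      ultimately show "s n \<in> {v \<in> D. \<gamma> v \<le> c - q l + e}" by auto
    qed
    from Lim_in_closed_set[OF cl this _ l] show ?thesis by simp
  qed
  hence lD: "l \<in> D" using zero_less_one by blast
  have "\<gamma> l \<le> c - q l" by (rule field_le_epsilon) (use \<open>\<And>e. e > 0 \<Longrightarrow> _\<close> in blast)
  thus "l \<in> {u \<in> D. \<Phi> x u \<le> c}" using lD unfolding \<Phi>_def q_def by simp
qed


lemma coercive: "\<exists>K c1. c1 \<ge> 0 \<and> (\<forall>u\<in>D. K - c1 * norm (u - x) + 1/2 * (norm (u - x))\<^sup>2 \<le> \<Phi> x u)"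
proof -
  obtain x0 c1 where x0: "x0 \<in> D" and c1: "c1 \<ge> 0" and lb: "\<And>u. u \<in> D \<Longrightarrow> \<gamma> x0 - 1 - c1 * norm (u - x0) \<le> \<gamma> u"
    using lin_lower by blast
  define K where "K = \<gamma> x0 - 1 - c1 * norm (x - x0)"
  have "K - c1 * norm (u - x) + 1/2 * (norm (u - x))\<^sup>2 \<le> \<Phi> x u" if u: "u \<in> D" for u
  proof -
    have "norm (u - x0) \<le> norm (u - x) + norm (x - x0)" using norm_triangle_ineq[of "u - x" "x - x0"] by simp
    hence "c1 * norm (u - x0) \<le> c1 * (norm (u - x) + norm (x - x0))" by (rule mult_left_mono[OF _ c1])
    thus ?thesis using lb[OF u] unfolding K_def \<Phi>_def by (simp add: algebra_simps)
  qed
  thus ?thesis using c1 by blast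
qed

lemma exists_min: "\<exists>p\<in>D. \<forall>u\<in>D. \<Phi> x p \<le> \<Phi> x u"
proof -
  obtain K c1 where c1: "c1 \<ge> 0" and lb: "\<And>u. u \<in> D \<Longrightarrow> K - c1 * norm (u - x) + 1/2 * (norm (u - x))\<^sup>2 \<le> \<Phi> x u"
    using coercive by blast
  have bb: "K - c1\<^sup>2 / 2 \<le> \<Phi> x u" if "u \<in> D" for u
  proof -
    have z: "0 \<le> (norm (u - x) - c1)\<^sup>2" by simp
    have "(norm (u - x) - c1)\<^sup>2 = (norm (u - x))\<^sup>2 - 2 * (norm (u - x) * c1) + c1\<^sup>2"
      by (simp add: power2_diff mult.assoc)
    hence "- c1\<^sup>2 / 2 \<le> - c1 * norm (u - x) + 1/2 * (norm (u - x))\<^sup>2" using z by (simp add: mult.commute)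
    thus ?thesis using lb[OF that] by linarith
  qed
  have bnd: "bounded {u \<in> D. \<Phi> x u \<le> c}" for c
  proof -
    define Q where "Q = \<bar>c - K\<bar>"
    define R where "R = 2 * c1 + 2 * Q + 1"
    have "{u \<in> D. \<Phi> x u \<le> c} \<subseteq> cball x R"
    proof
      fix u assume u: "u \<in> {u \<in> D. \<Phi> x u \<le> c}"
      define n where "n = norm (u - x)"
      have h: "1/2 * n\<^sup>2 - c1 * n \<le> Q" using lb[of u] u unfolding n_def Q_def by auto
      have "n \<le> R"
      proof (rule ccontr)
        assume "\<not> n \<le> R"
        hence nR: "n > R" by simp
        have a: "n / 2 - c1 \<ge> Q + 1/2" using nR unfolding R_def by simp
        have Q0: "Q \<ge> 0" unfolding Q_def by simp
        have n1: "n \<ge> 1" using a Q0 c1 by linarith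
        have "1 * (Q + 1/2) \<le> n * (n / 2 - c1)" using n1 a Q0 by (intro mult_mono) auto
        also have "n * (n / 2 - c1) = 1/2 * n\<^sup>2 - c1 * n" by (simp add: power2_eq_square algebra_simps)
        finally show False using h by simp
      qed
      thus "u \<in> cball x R" unfolding n_def by (simp add: dist_norm norm_minus_commute)
    qed
    thus ?thesis using bounded_cball bounded_subset by blast
  qed
  define m where "m = Inf (\<Phi> x ` D)"
  have bdd: "bdd_below (\<Phi> x ` D)" using bb by (intro bdd_belowI2) auto
  define F where "F k = {u \<in> D. \<Phi> x u \<le> m + 1 / (real k + 1)}" for k :: nat
  have Fc: "compact (F k)" for k
    unfolding F_def compact_eq_bounded_closed using bnd sub_closed by blast
  have Fne: "F k \<noteq> {}" for k
  proof -
    have "Inf (\<Phi> x ` D) < m + 1 / (real k + 1)" unfolding m_def by simp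
    moreover have "\<Phi> x ` D \<noteq> {}" using ne by simp
    ultimately obtain v where "v \<in> \<Phi> x ` D" "v < m + 1 / (real k + 1)" using cInf_lessD by metis
    then obtain u where "u \<in> D" "\<Phi> x u < m + 1 / (real k + 1)" by blast
    hence "u \<in> F k" unfolding F_def by simp
    thus ?thesis by blast
  qed
  have Fm: "F j \<subseteq> F i" if "i \<le> j" for i j
  proof -
    have h: "1 / (real j + 1) \<le> 1 / (real i + 1)" using that by (intro divide_left_mono) auto
    show ?thesis
    proof
      fix u assume "u \<in> F j"
      hence "u \<in> D" "\<Phi> x u \<le> m + 1 / (real j + 1)" unfolding F_def by auto
      thus "u \<in> F i" unfolding F_def using h by simp
    qed
  qed
  obtain p where p: "p \<in> \<Inter>(range F)" using compact_nest[of F, OF Fc Fne Fm] by blast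
  have pD: "p \<in> D" using p unfolding F_def by auto
  have "\<Phi> x p \<le> m"
  proof (rule field_le_epsilon)
    fix e :: real assume e: "e > 0"
    obtain k :: nat where k: "k > 0" "inverse (real k) < e" using ex_inverse_of_nat_less[OF e] by blast
    have "\<Phi> x p \<le> m + 1 / (real k + 1)" using p unfolding F_def by auto
    moreover have "1 / (real k + 1) \<le> inverse (real k)" using k by (simp add: field_simps)
    ultimately show "\<Phi> x p \<le> m + e" using k by linarith
  qed
  moreover have "m \<le> \<Phi> x u" if "u \<in> D" for u unfolding m_def using bdd that by (intro cInf_lower) auto
  ultimately show ?thesis using pD by (meson order_trans)
qed

lemma VI:
  assumes pD: "p \<in> D" and pm: "\<forall>u\<in>D. \<Phi> x p \<le> \<Phi> x u" and u: "u \<in> D"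
  shows "\<gamma> p + (x - p) \<bullet> (u - p) \<le> \<gamma> u"
proof -
  define A where "A = \<gamma> p - \<gamma> u - (p - x) \<bullet> (u - p)"
  define N where "N = (norm (u - p))\<^sup>2"
  have "A \<le> 0"
  proof (rule lim_lower[where q = "\<lambda>\<theta>. \<theta> / 2 * N"])
    have "((\<lambda>\<theta>. \<theta> / 2 * N) \<longlongrightarrow> 0 / 2 * N) (at_right 0)"
      by (intro tendsto_intros) simp
    thus "((\<lambda>\<theta>. \<theta> / 2 * N) \<longlongrightarrow> 0) (at_right 0)" by simp
  next
    fix \<theta> :: real assume th: "0 < \<theta>" "\<theta> \<le> 1"
    define w where "w = (1 - \<theta>) *\<^sub>R p + \<theta> *\<^sub>R u"
    have wc: "w \<in> D \<and> \<gamma> w \<le> (1 - \<theta>) * \<gamma> p + \<theta> * \<gamma> u" unfolding w_def using cvx[OF pD u] th by simp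
    have wx: "w - x = (p - x) - (- \<theta>) *\<^sub>R (u - p)" unfolding w_def by (simp add: algebra_simps)
    have E: "(norm (w - x))\<^sup>2 = (norm (p - x))\<^sup>2 - 2 * (- \<theta>) * ((u - p) \<bullet> (p - x)) + (- \<theta>)\<^sup>2 * N"
      unfolding wx N_def by (rule norm_sq_expand)
    have ic: "(u - p) \<bullet> (p - x) = (p - x) \<bullet> (u - p)" by (rule inner_commute)
    have "\<Phi> x p \<le> \<Phi> x w" using pm wc by blast
    hence "\<gamma> p + 1/2 * (norm (p - x))\<^sup>2 \<le> (1 - \<theta>) * \<gamma> p + \<theta> * \<gamma> u + 1/2 * (norm (w - x))\<^sup>2"
      using wc unfolding \<Phi>_def by linarith
    moreover have E': "(norm (w - x))\<^sup>2 = (norm (p - x))\<^sup>2 + 2 * (\<theta> * ((p - x) \<bullet> (u - p))) + \<theta>\<^sup>2 * N"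
      using E ic by simp
    moreover have "\<theta> * A = \<theta> * \<gamma> p - \<theta> * \<gamma> u - \<theta> * ((p - x) \<bullet> (u - p))"
      unfolding A_def by (simp add: algebra_simps)
    moreover have "\<theta> * (\<theta> / 2 * N) = 1/2 * (\<theta>\<^sup>2 * N)" by (simp add: power2_eq_square)
    moreover have "(1 - \<theta>) * \<gamma> p = \<gamma> p - \<theta> * \<gamma> p" by (simp add: algebra_simps)
    ultimately have "\<theta> * A \<le> \<theta> * (\<theta> / 2 * N)" by linarith
    thus "A \<le> \<theta> / 2 * N" using th by simp
  qed
  moreover have "(x - p) \<bullet> (u - p) = - ((p - x) \<bullet> (u - p))"
    by (metis inner_minus_left minus_diff_eq)
  ultimately show ?thesis unfolding A_def by linarith
qed

lemma VI_suff:
  assumes pD: "p \<in> D" and vi: "\<And>u. u \<in> D \<Longrightarrow> \<gamma> p + (x - p) \<bullet> (u - p) \<le> \<gamma> u"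
  shows "\<forall>u\<in>D. \<Phi> x p \<le> \<Phi> x u"
proof
  fix u assume u: "u \<in> D"
  have "(norm ((u - p) - 1 *\<^sub>R (x - p)))\<^sup>2 = (norm (u - p))\<^sup>2 - 2 * 1 * ((x - p) \<bullet> (u - p)) + 1\<^sup>2 * (norm (x - p))\<^sup>2"
    by (rule norm_sq_expand)
  moreover have "(u - p) - 1 *\<^sub>R (x - p) = u - x" by simp
  moreover have "norm (x - p) = norm (p - x)" by (rule norm_minus_commute)
  ultimately have "(norm (u - x))\<^sup>2 \<ge> (norm (p - x))\<^sup>2 - 2 * ((x - p) \<bullet> (u - p))" by simp
  thus "\<Phi> x p \<le> \<Phi> x u" using vi[OF u] unfolding \<Phi>_def by linarith
qed

lemma min_nonexp:
  assumes pD: "p \<in> D" and pm: "\<forall>u\<in>D. \<Phi> x p \<le> \<Phi> x u"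
    and qD: "q \<in> D" and qm: "\<forall>u\<in>D. \<Phi> y q \<le> \<Phi> y u"
  shows "norm (p - q) \<le> norm (x - y)"
proof -
  have a: "\<gamma> p + (x - p) \<bullet> (q - p) \<le> \<gamma> q" by (rule VI[OF pD pm qD])
  have b: "\<gamma> q + (y - q) \<bullet> (p - q) \<le> \<gamma> p" by (rule VI[OF qD qm pD])
  have e1: "(x - p) \<bullet> (q - p) = - ((x - p) \<bullet> (p - q))"
    by (metis inner_minus_right minus_diff_eq)
  have e2: "- ((x - p) \<bullet> (p - q)) + (y - q) \<bullet> (p - q) = ((y - q) - (x - p)) \<bullet> (p - q)"
    by (simp add: inner_diff_left)
  have e3: "(y - q) - (x - p) = (p - q) - (x - y)" by (simp add: algebra_simps)
  have e4: "((p - q) - (x - y)) \<bullet> (p - q) = (norm (p - q))\<^sup>2 - (x - y) \<bullet> (p - q)"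
    by (simp add: inner_diff_left power2_norm_eq_inner)
  have e: "(x - p) \<bullet> (q - p) + (y - q) \<bullet> (p - q) = (norm (p - q))\<^sup>2 - (x - y) \<bullet> (p - q)"
    using e1 e2 e3 e4 by simp
  have "(norm (p - q))\<^sup>2 \<le> (x - y) \<bullet> (p - q)" using a b e by linarith
  also have "\<dots> \<le> norm (x - y) * norm (p - q)" by (rule norm_cauchy_schwarz)
  finally have h: "(norm (p - q))\<^sup>2 \<le> norm (x - y) * norm (p - q)" .
  show ?thesis
  proof (cases "norm (p - q) = 0")
    case True thus ?thesis by simp
  next
    case False
    hence "norm (p - q) > 0" by simp
    thus ?thesis using h by (simp add: power2_eq_square)
  qed
qed

end

lemma g_cases:
  assumes "proper_fun g"
  obtains a where "g v = ereal a" | "g v = \<infinity>"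
  using assms unfolding proper_fun_def by (cases "g v") auto

lemma g_fin:
  assumes "proper_fun g" "g v \<noteq> \<infinity>"
  shows "g v = ereal (real_of_ereal (g v))"
  using assms unfolding proper_fun_def by (cases "g v") auto

lemma ereal_cvxdom:
  fixes g :: "'a::euclidean_space \<Rightarrow> ereal"
  assumes pr: "proper_fun g" and ls: "lsc_fun g" and cv: "ereal_convex_fun g" and t: "t > 0"
  shows "cvxdom {v. g v \<noteq> \<infinity>} (\<lambda>v. t * real_of_ereal (g v))"
proof
  show "{v. g v \<noteq> \<infinity>} \<noteq> {}" using pr unfolding proper_fun_def by auto
next
  fix x y :: 'a and \<theta> :: real
  assume x: "x \<in> {v. g v \<noteq> \<infinity>}" and y: "y \<in> {v. g v \<noteq> \<infinity>}" and th: "0 \<le> \<theta>" "\<theta> \<le> 1"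
  define a where "a = real_of_ereal (g x)"
  define b where "b = real_of_ereal (g y)"
  have a: "g x = ereal a" unfolding a_def using g_fin[OF pr] x by simp
  have b: "g y = ereal b" unfolding b_def using g_fin[OF pr] y by simp
  define w where "w = (1 - \<theta>) *\<^sub>R x + \<theta> *\<^sub>R y"
  have "g w \<le> ereal (1 - \<theta>) * g x + ereal \<theta> * g y" using cv th unfolding ereal_convex_fun_def w_def by blast
  hence le: "g w \<le> ereal ((1 - \<theta>) * a + \<theta> * b)" using a b by simp
  hence "g w \<noteq> \<infinity>" by auto
  define c where "c = real_of_ereal (g w)"
  have c: "g w = ereal c" unfolding c_def using g_fin[OF pr] \<open>g w \<noteq> \<infinity>\<close> by simp
  have "c \<le> (1 - \<theta>) * a + \<theta> * b" using le c by simp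
  hence "t * c \<le> t * ((1 - \<theta>) * a + \<theta> * b)" using t by (intro mult_left_mono) auto
  also have "\<dots> = (1 - \<theta>) * (t * a) + \<theta> * (t * b)" by (simp add: algebra_simps)
  finally have "t * c \<le> (1 - \<theta>) * (t * a) + \<theta> * (t * b)" .
  thus "w \<in> {v. g v \<noteq> \<infinity>} \<and> t * real_of_ereal (g w) \<le> (1 - \<theta>) * (t * real_of_ereal (g x)) + \<theta> * (t * real_of_ereal (g y))"
    using a b c by simp
next
  fix c :: real
  have "{v \<in> {v. g v \<noteq> \<infinity>}. t * real_of_ereal (g v) \<le> c} = {v. g v \<le> ereal (c / t)}"
  proof (intro set_eqI iffI)
    fix v assume "v \<in> {v \<in> {v. g v \<noteq> \<infinity>}. t * real_of_ereal (g v) \<le> c}"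
    moreover have e: "g v = ereal (real_of_ereal (g v))" using calculation g_fin[OF pr] by simp
    moreover have "real_of_ereal (g v) \<le> c / t" using calculation t by (simp add: pos_le_divide_eq mult.commute)
    ultimately show "v \<in> {v. g v \<le> ereal (c / t)}" by (metis mem_Collect_eq ereal_less_eq(3))
  next
    fix v assume v: "v \<in> {v. g v \<le> ereal (c / t)}"
    hence "g v \<noteq> \<infinity>" by auto
    moreover have e: "g v = ereal (real_of_ereal (g v))" using calculation g_fin[OF pr] by simp
    moreover have "real_of_ereal (g v) \<le> c / t" using v e by (metis mem_Collect_eq ereal_less_eq(3))
    ultimately show "v \<in> {v \<in> {v. g v \<noteq> \<infinity>}. t * real_of_ereal (g v) \<le> c}" using t by (simp add: pos_le_divide_eq mult.commute)
  qed
  thus "closed {v \<in> {v. g v \<noteq> \<infinity>}. t * real_of_ereal (g v) \<le> c}"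
    using ls unfolding lsc_fun_def by simp
qed

lemma prox_prop_iff:
  fixes g :: "'a::euclidean_space \<Rightarrow> ereal"
  assumes pr: "proper_fun g" and t: "t > 0"
  shows "(\<forall>u. ereal t * g p + ereal (1/2 * (norm (p - x))\<^sup>2) \<le> ereal t * g u + ereal (1/2 * (norm (u - x))\<^sup>2))
    \<longleftrightarrow> (g p \<noteq> \<infinity> \<and> (\<forall>u. g u \<noteq> \<infinity> \<longrightarrow> t * real_of_ereal (g p) + 1/2 * (norm (p - x))\<^sup>2 \<le> t * real_of_ereal (g u) + 1/2 * (norm (u - x))\<^sup>2))"
proof
  assume h: "\<forall>u. ereal t * g p + ereal (1/2 * (norm (p - x))\<^sup>2) \<le> ereal t * g u + ereal (1/2 * (norm (u - x))\<^sup>2)"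
  obtain u0 where u0f: "g u0 \<noteq> \<infinity>" using pr unfolding proper_fun_def by blast
  have u0: "g u0 = ereal (real_of_ereal (g u0))" by (rule g_fin[OF pr u0f])
  have gp: "g p \<noteq> \<infinity>"
  proof
    assume inf: "g p = \<infinity>"
    have L: "ereal t * g p + ereal (1/2 * (norm (p - x))\<^sup>2) = \<infinity>" using inf t by simp
    have R: "ereal t * g u0 + ereal (1/2 * (norm (u0 - x))\<^sup>2) \<noteq> \<infinity>" by (subst u0) simp
    have "\<infinity> \<le> ereal t * g u0 + ereal (1/2 * (norm (u0 - x))\<^sup>2)" using h L by metis
    thus False using R by simp
  qed
  have a: "g p = ereal (real_of_ereal (g p))" by (rule g_fin[OF pr gp])
  have "t * real_of_ereal (g p) + 1/2 * (norm (p - x))\<^sup>2 \<le> t * real_of_ereal (g u) + 1/2 * (norm (u - x))\<^sup>2"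
    if "g u \<noteq> \<infinity>" for u
  proof -
    have c: "g u = ereal (real_of_ereal (g u))" by (rule g_fin[OF pr that])
    have "ereal t * g p + ereal (1/2 * (norm (p - x))\<^sup>2) \<le> ereal t * g u + ereal (1/2 * (norm (u - x))\<^sup>2)"
      using h by blast
    hence "ereal (t * real_of_ereal (g p) + 1/2 * (norm (p - x))\<^sup>2) \<le> ereal (t * real_of_ereal (g u) + 1/2 * (norm (u - x))\<^sup>2)"
      by (subst (asm) a, subst (asm) c) simp
    thus ?thesis by simp
  qed
  thus "g p \<noteq> \<infinity> \<and> (\<forall>u. g u \<noteq> \<infinity> \<longrightarrow> t * real_of_ereal (g p) + 1/2 * (norm (p - x))\<^sup>2 \<le> t * real_of_ereal (g u) + 1/2 * (norm (u - x))\<^sup>2)"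
    using gp by blast
next
  assume h: "g p \<noteq> \<infinity> \<and> (\<forall>u. g u \<noteq> \<infinity> \<longrightarrow> t * real_of_ereal (g p) + 1/2 * (norm (p - x))\<^sup>2 \<le> t * real_of_ereal (g u) + 1/2 * (norm (u - x))\<^sup>2)"
  have a: "g p = ereal (real_of_ereal (g p))" using g_fin[OF pr] h by blast
  show "\<forall>u. ereal t * g p + ereal (1/2 * (norm (p - x))\<^sup>2) \<le> ereal t * g u + ereal (1/2 * (norm (u - x))\<^sup>2)"
  proof
    fix u
    show "ereal t * g p + ereal (1/2 * (norm (p - x))\<^sup>2) \<le> ereal t * g u + ereal (1/2 * (norm (u - x))\<^sup>2)"
    proof (cases "g u = \<infinity>")
      case False
      have c: "g u = ereal (real_of_ereal (g u))" by (rule g_fin[OF pr False])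
      have "t * real_of_ereal (g p) + 1/2 * (norm (p - x))\<^sup>2 \<le> t * real_of_ereal (g u) + 1/2 * (norm (u - x))\<^sup>2"
        using h False by blast
      thus ?thesis by (subst a, subst c) simp
    next
      case True
      thus ?thesis using t by (subst a) simp
    qed
  qed
qed

context
  fixes g :: "'a::euclidean_space \<Rightarrow> ereal" and t :: real
  assumes pr: "proper_fun g" and ls: "lsc_fun g" and cv: "ereal_convex_fun g" and t: "t > 0"
begin

interpretation C: cvxdom "{v. g v \<noteq> \<infinity>}" "\<lambda>v. t * real_of_ereal (g v)"
  by (rule ereal_cvxdom[OF pr ls cv t])

lemma prox_min:
  "g (prox (\<lambda>v. ereal t * g v) x) \<noteq> \<infinity> \<and> (\<forall>u. g u \<noteq> \<infinity> \<longrightarrow>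
     t * real_of_ereal (g (prox (\<lambda>v. ereal t * g v) x)) + 1/2 * (norm (prox (\<lambda>v. ereal t * g v) x - x))\<^sup>2
       \<le> t * real_of_ereal (g u) + 1/2 * (norm (u - x))\<^sup>2)"
proof -
  obtain p where "p \<in> {v. g v \<noteq> \<infinity>}" "\<forall>u\<in>{v. g v \<noteq> \<infinity>}. C.\<Phi> x p \<le> C.\<Phi> x u"
    using C.exists_min by blast
  hence "\<forall>u. ereal t * g p + ereal (1/2 * (norm (p - x))\<^sup>2) \<le> ereal t * g u + ereal (1/2 * (norm (u - x))\<^sup>2)"
    unfolding prox_prop_iff[OF pr t] C.\<Phi>_def by auto
  hence "\<forall>u. ereal t * g (prox (\<lambda>v. ereal t * g v) x) + ereal (1/2 * (norm (prox (\<lambda>v. ereal t * g v) x - x))\<^sup>2)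
       \<le> ereal t * g u + ereal (1/2 * (norm (u - x))\<^sup>2)"
    unfolding prox_def by (rule someI[where P = "\<lambda>p. \<forall>u. ereal t * g p + ereal (1/2 * (norm (p - x))\<^sup>2) \<le> ereal t * g u + ereal (1/2 * (norm (u - x))\<^sup>2)"])
  thus ?thesis unfolding prox_prop_iff[OF pr t] .
qed

lemma prox_nonexp: "norm (prox (\<lambda>v. ereal t * g v) x - prox (\<lambda>v. ereal t * g v) y) \<le> norm (x - y)"
  using prox_min[of x] prox_min[of y]
  by (intro C.min_nonexp) (auto simp: C.\<Phi>_def)

lemma prox_unique:
  assumes "g p \<noteq> \<infinity>" and "\<And>u. g u \<noteq> \<infinity> \<Longrightarrow> t * real_of_ereal (g p) + (x - p) \<bullet> (u - p) \<le> t * real_of_ereal (g u)"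
  shows "prox (\<lambda>v. ereal t * g v) x = p"
proof -
  have m: "\<forall>u\<in>{v. g v \<noteq> \<infinity>}. C.\<Phi> x p \<le> C.\<Phi> x u"
    by (rule C.VI_suff) (use assms in auto)
  have "norm (prox (\<lambda>v. ereal t * g v) x - p) \<le> norm (x - x)"
    using prox_min[of x] m assms(1) by (intro C.min_nonexp) (auto simp: C.\<Phi>_def)
  thus ?thesis by simp
qed

end

lemma fixed_point_VI:
  fixes g :: "'a::euclidean_space \<Rightarrow> ereal" and f :: "'a \<Rightarrow> real"
  assumes pr: "proper_fun g" and ls: "lsc_fun g" and cv: "ereal_convex_fun g"
    and d: "(f has_derivative (\<lambda>h. G \<bullet> h)) (at p)"
    and mn: "\<And>y. ereal (f p) + g p \<le> ereal (f y) + g y"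
  shows "g p \<noteq> \<infinity> \<and> (\<forall>u. g u \<noteq> \<infinity> \<longrightarrow> real_of_ereal (g p) - real_of_ereal (g u) \<le> G \<bullet> (u - p))"
proof -
  interpret C1: cvxdom "{v. g v \<noteq> \<infinity>}" "\<lambda>v. 1 * real_of_ereal (g v)"
    by (rule ereal_cvxdom[OF pr ls cv]) simp
  obtain u0 where u0f: "g u0 \<noteq> \<infinity>" using pr unfolding proper_fun_def by blast
  have u0: "g u0 = ereal (real_of_ereal (g u0))" by (rule g_fin[OF pr u0f])
  have gp: "g p \<noteq> \<infinity>"
  proof
    assume inf: "g p = \<infinity>"
    have L: "ereal (f p) + g p = \<infinity>" using inf by simp
    have R: "ereal (f u0) + g u0 \<noteq> \<infinity>" by (subst u0) simp
    have "\<infinity> \<le> ereal (f u0) + g u0" using mn[of u0] L by metis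
    thus False using R by simp
  qed
  have a: "g p = ereal (real_of_ereal (g p))" by (rule g_fin[OF pr gp])
  have rmin: "f p + real_of_ereal (g p) \<le> f y + real_of_ereal (g y)" if "g y \<noteq> \<infinity>" for y
  proof -
    have c: "g y = ereal (real_of_ereal (g y))" by (rule g_fin[OF pr that])
    have "ereal (f p) + g p \<le> ereal (f y) + g y" by (rule mn)
    hence "ereal (f p + real_of_ereal (g p)) \<le> ereal (f y + real_of_ereal (g y))"
      by (subst (asm) a, subst (asm) c) simp
    thus ?thesis by simp
  qed
  have "real_of_ereal (g p) - real_of_ereal (g u) \<le> G \<bullet> (u - p)" if uf: "g u \<noteq> \<infinity>" for u
  proof (rule lim_lower[OF _ dir_deriv[OF d]])
    fix \<theta> :: real assume th: "0 < \<theta>" "\<theta> \<le> 1"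
    define w where "w = (1 - \<theta>) *\<^sub>R p + \<theta> *\<^sub>R u"
    have wc: "g w \<noteq> \<infinity> \<and> 1 * real_of_ereal (g w) \<le> (1 - \<theta>) * (1 * real_of_ereal (g p)) + \<theta> * (1 * real_of_ereal (g u))"
      using C1.cvx[of p u \<theta>] gp uf th unfolding w_def by simp
    have m1: "f p + real_of_ereal (g p) \<le> f w + real_of_ereal (g w)" using rmin wc by blast
    have weq: "w = p + \<theta> *\<^sub>R (u - p)" unfolding w_def by (simp add: algebra_simps)
    have e: "(1 - \<theta>) * (1 * real_of_ereal (g p)) + \<theta> * (1 * real_of_ereal (g u)) = real_of_ereal (g p) - \<theta> * real_of_ereal (g p) + \<theta> * real_of_ereal (g u)"
      by (simp add: algebra_simps)
    have e2: "\<theta> * (real_of_ereal (g p) - real_of_ereal (g u)) = \<theta> * real_of_ereal (g p) - \<theta> * real_of_ereal (g u)"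
      by (simp add: algebra_simps)
    have "\<theta> * (real_of_ereal (g p) - real_of_ereal (g u)) \<le> f w - f p"
      using m1 conjunct2[OF wc] e e2 by linarith
    hence "\<theta> * (real_of_ereal (g p) - real_of_ereal (g u)) \<le> f (p + \<theta> *\<^sub>R (u - p)) - f p"
      unfolding weq .
    thus "real_of_ereal (g p) - real_of_ereal (g u) \<le> (f (p + \<theta> *\<^sub>R (u - p)) - f p) / \<theta>"
      using th by (simp add: le_divide_eq mult.commute)
  qed
  thus ?thesis using gp by blast
qed

lemma ratio_bound:
  assumes s: "s \<ge> 0" and a: "a \<ge> 0" and r: "ereal s / ereal a < ereal B"
  shows "s \<le> max B 0 * a"
proof (cases "a = 0")
  case True
  have "s = 0"
  proof (rule ccontr)
    assume "s \<noteq> 0" hence sp: "s > 0" using s by simp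
    have "ereal s / ereal a = \<infinity>" using True sp by (simp add: divide_ereal_def)
    thus False using r by simp
  qed
  thus ?thesis using True by simp
next
  case False
  hence ap: "a > 0" using a by simp
  have "ereal s / ereal a = ereal (s / a)" using ap by simp
  hence "s / a < B" using r by simp
  hence "s < B * a" using ap by (simp add: divide_less_eq)
  also have "B * a \<le> max B 0 * a" using ap by (intro mult_right_mono) auto
  finally show ?thesis by simp
qed

lemma step_bound:
  fixes d d' a r C0 C s B :: real
  assumes h: "d' \<le> d - a * (1 - r) * d + a * C0 + C * s"
    and sB: "s \<le> B * a" and a: "0 \<le> a" "a < 1" and r: "0 \<le> r" "r < 1" and C: "C \<ge> 0"
  shows "d' \<le> max d ((C0 + C * B) / (1 - r))"
proof -
  define R where "R = (C0 + C * B) / (1 - r)"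
  define l where "l = a * (1 - r)"
  have l: "0 \<le> l" "l \<le> 1" unfolding l_def using a r by (auto intro: mult_le_one)
  have "C * s \<le> C * (B * a)" using sB C by (rule mult_left_mono)
  hence "d' \<le> d - l * d + a * (C0 + C * B)" using h unfolding l_def by (simp add: algebra_simps)
  also have "a * (C0 + C * B) = l * R" unfolding l_def R_def using r by (simp add: field_simps)
  finally have "d' \<le> (1 - l) * d + l * R" by (simp add: algebra_simps)
  also have "\<dots> \<le> (1 - l) * max d R + l * max d R" using l by (intro add_mono mult_left_mono) auto
  also have "\<dots> = max d R" by (simp add: algebra_simps)
  finally show ?thesis unfolding R_def .
qed

theorem mainTheorem17:
  fixes N :: nat
    and f :: "nat \<Rightarrow> 'a::euclidean_space \<Rightarrow> real"
    and gf :: "nat \<Rightarrow> 'a \<Rightarrow> 'a"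
    and Lf :: "nat \<Rightarrow> real"
    and g :: "nat \<Rightarrow> 'a \<Rightarrow> ereal"
    and \<omega> :: "'a \<Rightarrow> real" and g\<omega> :: "'a \<Rightarrow> 'a"
    and \<mu> L\<omega> u :: real
    and t :: "nat \<Rightarrow> real"
    and \<alpha> :: "nat \<Rightarrow> nat \<Rightarrow> real"
    and x :: "nat \<Rightarrow> 'a"
  assumes f_convex: "\<And>i. i \<le> N \<Longrightarrow> convex_on UNIV (f i)"
    and f_grad: "\<And>i y. i \<le> N \<Longrightarrow> (f i has_derivative (\<lambda>h. gf i y \<bullet> h)) (at y)"
    and f_lip: "\<And>i. i \<le> N \<Longrightarrow> lipschitz_on (Lf i) UNIV (gf i)"
    and g_proper: "\<And>i. i \<le> N \<Longrightarrow> proper_fun (g i)"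
    and g_lsc: "\<And>i. i \<le> N \<Longrightarrow> lsc_fun (g i)"
    and g_convex: "\<And>i. i \<le> N \<Longrightarrow> ereal_convex_fun (g i)"
    and mu_pos: "\<mu> > 0"
    and omega_strong: "convex_on UNIV (\<lambda>y. \<omega> y - \<mu> / 2 * (norm y)\<^sup>2)"
    and omega_grad: "\<And>y. (\<omega> has_derivative (\<lambda>h. g\<omega> y \<bullet> h)) (at y)"
    and omega_lip: "lipschitz_on L\<omega> UNIV g\<omega>"
    and u_range: "0 < u" "u \<le> 2 / (L\<omega> + \<mu>)"
    and t_range: "\<And>i. i < N \<Longrightarrow> 0 < t i \<and> t i * Lf i \<le> 1"
    and X1_nonempty: "Xstar f g 1 \<noteq> {}"
    and P1: "\<And>k. (\<forall>i\<le>N. 0 \<le> \<alpha> k i) \<and> \<alpha> k 0 < 1 \<and> (\<Sum>i\<le>N. \<alpha> k i) = 1"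
    and P2_lim: "(\<lambda>k. \<alpha> k 0) \<longlonglongrightarrow> 0"
    and P2_div: "\<not> summable (\<lambda>k. \<alpha> k 0)"
    and P2_delta: "limsup (\<lambda>k. ereal (\<Sum>i\<in>{2..N}. \<alpha> k i) / ereal (\<alpha> k 0)) < \<infinity>"
    and iter: "\<And>k. x (Suc k) = (\<Sum>i\<le>N. \<alpha> k i *\<^sub>R Top g\<omega> u gf g t i (x k))"
  shows "bounded (range x)"
proof -
  obtain r where r0: "0 \<le> r" and r1: "r < 1"
    and rS: "\<And>x y. norm ((x - u *\<^sub>R g\<omega> x) - (y - u *\<^sub>R g\<omega> y)) \<le> r * norm (x - y)"
    using S_contraction[OF mu_pos omega_strong omega_grad omega_lip u_range] by blast
  define T where "T = Top g\<omega> u gf g t"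
  have T0: "T 0 x = x - u *\<^sub>R g\<omega> x" for x unfolding T_def Top_def by simp
  have Ti: "T i x = prox (\<lambda>v. ereal (t (i - 1)) * g (i - 1) v) (x - t (i - 1) *\<^sub>R gf (i - 1) x)"
    if "i \<noteq> 0" for i x unfolding T_def Top_def using that by simp
  have Tne: "norm (T i x - T i y) \<le> norm (x - y)" if i: "1 \<le> i" "i \<le> N" for i x y
  proof -
    have j: "i - 1 < N" "i - 1 \<le> N" using i by auto
    have "norm (T i x - T i y) \<le> norm ((x - t (i - 1) *\<^sub>R gf (i - 1) x) - (y - t (i - 1) *\<^sub>R gf (i - 1) y))"
    proof -
      have i0: "i \<noteq> 0" using i by simp
      have tp: "0 < t (i - 1)" using t_range[OF j(1)] by simp
      show ?thesis unfolding Ti[OF i0]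
        by (rule prox_nonexp[OF g_proper[OF j(2)] g_lsc[OF j(2)] g_convex[OF j(2)] tp])
    qed
    also have "\<dots> \<le> norm (x - y)"
      by (rule grad_step_nonexp[OF f_convex[OF j(2)] f_grad[OF j(2)] f_lip[OF j(2)]]) (use t_range[OF j(1)] in auto)
    finally show ?thesis .
  qed
  obtain p where p: "p \<in> Xstar f g 1" using X1_nonempty by blast
  have pmin: "ereal (f 0 p) + g 0 p \<le> ereal (f 0 y) + g 0 y" for y
    using p by (simp add: phi_def)
  have N0: "0 \<le> N" by simp
  have vi: "g 0 p \<noteq> \<infinity> \<and> (\<forall>v. g 0 v \<noteq> \<infinity> \<longrightarrow> real_of_ereal (g 0 p) - real_of_ereal (g 0 v) \<le> gf 0 p \<bullet> (v - p))"
    by (rule fixed_point_VI[OF g_proper[OF N0] g_lsc[OF N0] g_convex[OF N0] f_grad[OF N0] pmin])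
  have T1p: "T 1 p = p" if N1: "1 \<le> N"
  proof -
    have t0: "0 < t 0" using t_range[of 0] N1 by simp
    have "prox (\<lambda>v. ereal (t 0) * g 0 v) (p - t 0 *\<^sub>R gf 0 p) = p"
    proof (rule prox_unique[OF g_proper[OF N0] g_lsc[OF N0] g_convex[OF N0] t0])
      show "g 0 p \<noteq> \<infinity>" using vi by blast
      fix v assume v: "g 0 v \<noteq> \<infinity>"
      have "real_of_ereal (g 0 p) - real_of_ereal (g 0 v) \<le> gf 0 p \<bullet> (v - p)" using vi v by blast
      hence "t 0 * (real_of_ereal (g 0 p) - real_of_ereal (g 0 v)) \<le> t 0 * (gf 0 p \<bullet> (v - p))"
        using t0 by (intro mult_left_mono) auto
      moreover have "(p - t 0 *\<^sub>R gf 0 p - p) \<bullet> (v - p) = - (t 0 * (gf 0 p \<bullet> (v - p)))" by simp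
      ultimately show "t 0 * real_of_ereal (g 0 p) + (p - t 0 *\<^sub>R gf 0 p - p) \<bullet> (v - p) \<le> t 0 * real_of_ereal (g 0 v)"
        by (simp add: algebra_simps)
    qed
    thus ?thesis using Ti[of 1 p] by simp
  qed
  define C0 where "C0 = norm (T 0 p - p)"
  define C where "C = (\<Sum>i\<le>N. norm (T i p - p))"
  have C: "C \<ge> 0" unfolding C_def by (simp add: sum_nonneg)
  define dd where "dd k = norm (x k - p)" for k
  have a_nonneg: "0 \<le> \<alpha> k i" if "i \<le> N" for k i using P1[of k] that by blast
  have rec: "dd (Suc k) \<le> dd k - \<alpha> k 0 * (1 - r) * dd k + \<alpha> k 0 * C0 + C * (\<Sum>i\<in>{2..N}. \<alpha> k i)" for k
  proof -
    define b where "b i = dd k + (if i = 0 then (r - 1) * dd k + C0 else 0) + (if 2 \<le> i then C else 0)" for i :: nat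
    have tb: "norm (T i (x k) - p) \<le> b i" if i: "i \<le> N" for i
    proof (cases "i = 0")
      case True
      have "norm (T 0 (x k) - p) \<le> norm (T 0 (x k) - T 0 p) + norm (T 0 p - p)"
        using norm_triangle_ineq[of "T 0 (x k) - T 0 p" "T 0 p - p"] by simp
      also have "norm (T 0 (x k) - T 0 p) \<le> r * dd k" unfolding T0 dd_def by (rule rS)
      finally show ?thesis unfolding b_def C0_def using True by (simp add: algebra_simps)
    next
      case False
      hence i1: "1 \<le> i" by simp
      have ne: "norm (T i (x k) - T i p) \<le> dd k" unfolding dd_def by (rule Tne[OF i1 i])
      show ?thesis
      proof (cases "i = 1")
        case True
        thus ?thesis using ne T1p i unfolding b_def by simp
      next
        case False
        hence i2: "2 \<le> i" using i1 by simp
        have "norm (T i (x k) - p) \<le> norm (T i (x k) - T i p) + norm (T i p - p)"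
          using norm_triangle_ineq[of "T i (x k) - T i p" "T i p - p"] by simp
        also have "norm (T i p - p) \<le> C" unfolding C_def using i
          by (intro member_le_sum) auto
        finally show ?thesis using ne i2 unfolding b_def by simp
      qed
    qed
    have sum1: "(\<Sum>i\<le>N. \<alpha> k i) = 1" using P1[of k] by blast
    have "x (Suc k) - p = (\<Sum>i\<le>N. \<alpha> k i *\<^sub>R T i (x k)) - (\<Sum>i\<le>N. \<alpha> k i) *\<^sub>R p"
      unfolding iter T_def sum1 by simp
    also have "\<dots> = (\<Sum>i\<le>N. \<alpha> k i *\<^sub>R (T i (x k) - p))"
      by (simp add: scaleR_sum_left sum_subtractf scaleR_diff_right)
    finally have xe: "x (Suc k) - p = (\<Sum>i\<le>N. \<alpha> k i *\<^sub>R (T i (x k) - p))" .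
    have "dd (Suc k) \<le> (\<Sum>i\<le>N. norm (\<alpha> k i *\<^sub>R (T i (x k) - p)))" unfolding dd_def xe by (rule norm_sum)
    also have "\<dots> \<le> (\<Sum>i\<le>N. \<alpha> k i * b i)"
    proof (rule sum_mono)
      fix i assume "i \<in> {..N}"
      hence i: "i \<le> N" by simp
      show "norm (\<alpha> k i *\<^sub>R (T i (x k) - p)) \<le> \<alpha> k i * b i"
        using a_nonneg[OF i] tb[OF i] by (simp add: mult_left_mono)
    qed
    also have "(\<Sum>i\<le>N. \<alpha> k i * b i) = dd k * (\<Sum>i\<le>N. \<alpha> k i) + (\<Sum>i\<le>N. (if i = 0 then \<alpha> k 0 * ((r - 1) * dd k + C0) else 0))
        + (\<Sum>i\<le>N. (if 2 \<le> i then \<alpha> k i * C else 0))"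
    proof -
      have pw: "\<alpha> k i * b i = dd k * \<alpha> k i + (if i = 0 then \<alpha> k 0 * ((r - 1) * dd k + C0) else 0)
          + (if 2 \<le> i then \<alpha> k i * C else 0)" for i
        by (cases "i = 0") (auto simp: b_def algebra_simps)
      have "(\<Sum>i\<le>N. \<alpha> k i * b i) = (\<Sum>i\<le>N. dd k * \<alpha> k i) + (\<Sum>i\<le>N. (if i = 0 then \<alpha> k 0 * ((r - 1) * dd k + C0) else 0))
        + (\<Sum>i\<le>N. (if 2 \<le> i then \<alpha> k i * C else 0))"
        unfolding pw by (simp add: sum.distrib)
      thus ?thesis by (simp add: sum_distrib_left)
    qed
    also have "(\<Sum>i\<le>N. (if i = 0 then \<alpha> k 0 * ((r - 1) * dd k + C0) else 0)) = \<alpha> k 0 * ((r - 1) * dd k + C0)"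
      by (simp add: sum.delta)
    also have "(\<Sum>i\<le>N. (if 2 \<le> i then \<alpha> k i * C else 0)) = (\<Sum>i\<in>{2..N}. \<alpha> k i * C)"
    proof -
      have "{i \<in> {..N}. 2 \<le> i} = {2..N}" by auto
      thus ?thesis using sum.inter_filter[of "{..N}" "\<lambda>i. \<alpha> k i * C" "\<lambda>i. 2 \<le> i"] by simp
    qed
    also have "(\<Sum>i\<in>{2..N}. \<alpha> k i * C) = C * (\<Sum>i\<in>{2..N}. \<alpha> k i)" by (simp add: sum_distrib_left mult.commute)
    finally show ?thesis unfolding sum1 by (simp add: algebra_simps)
  qed
  have "limsup (\<lambda>k. ereal (\<Sum>i\<in>{2..N}. \<alpha> k i) / ereal (\<alpha> k 0)) \<noteq> \<infinity>" using P2_delta by simp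
  then obtain n :: nat where n: "limsup (\<lambda>k. ereal (\<Sum>i\<in>{2..N}. \<alpha> k i) / ereal (\<alpha> k 0)) < ereal (real n)"
    using less_PInf_Ex_of_nat by blast
  define B where "B = max (real n) 0"
  have ev: "\<forall>\<^sub>F k in sequentially. (\<Sum>i\<in>{2..N}. \<alpha> k i) \<le> B * \<alpha> k 0"
    using Limsup_lessD[OF n]
  proof (rule eventually_mono)
    fix k assume "ereal (\<Sum>i\<in>{2..N}. \<alpha> k i) / ereal (\<alpha> k 0) < ereal (real n)"
    moreover have "0 \<le> (\<Sum>i\<in>{2..N}. \<alpha> k i)" using a_nonneg by (intro sum_nonneg) auto
    moreover have "0 \<le> \<alpha> k 0" using a_nonneg by simp
    ultimately show "(\<Sum>i\<in>{2..N}. \<alpha> k i) \<le> B * \<alpha> k 0" unfolding B_def by (rule ratio_bound[rotated 2])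
  qed
  then obtain K where K: "\<And>k. k \<ge> K \<Longrightarrow> (\<Sum>i\<in>{2..N}. \<alpha> k i) \<le> B * \<alpha> k 0"
    unfolding eventually_sequentially by blast
  define R where "R = (C0 + C * B) / (1 - r)"
  define Dm where "Dm = max (Max (dd ` {..K})) R"
  have bnd: "dd k \<le> Dm" for k
  proof (induction k)
    case 0
    show ?case unfolding Dm_def by (rule max.coboundedI1) (rule Max_ge, auto)
  next
    case (Suc k)
    show ?case
    proof (cases "Suc k \<le> K")
      case True
      show ?thesis unfolding Dm_def by (rule max.coboundedI1) (rule Max_ge, use True in auto)
    next
      case False
      hence kK: "k \<ge> K" by simp
      have "dd (Suc k) \<le> max (dd k) R" unfolding R_def
        by (rule step_bound[OF rec K[OF kK]]) (use P1[of k] a_nonneg r0 r1 C in auto)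
      also have "\<dots> \<le> Dm" using Suc.IH unfolding Dm_def by auto
      finally show ?thesis .
    qed
  qed
  have "range x \<subseteq> cball p Dm"
    using bnd unfolding dd_def by (auto simp: dist_norm norm_minus_commute)
  thus ?thesis using bounded_cball bounded_subset by blast
qed

end
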